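(* Given a finite set of types $T$ and a positive integer $n$, it holds that $\mathrm{PoA}(\mathcal{G}_T^n)=\mathrm{GPoA}(\mathcal{G}_T^n)$. Furthermore, there exists an $n$-player game $G\in\mathcal{G}_T^n$ with $|\mathcal{R}|\le 2n$ resources and $\mathrm{PoA}(G)=\mathrm{GPoA}(\mathcal{G}_T^n)$.
   Context: Fix a positive integer $n$ and a finite set of resource types $T=\{(c_1,f_1),\dots,(c_m,f_m)\}$, where $c_t,f_t:\{1,\dots,n\}\to\mathbb{R}$, with the convention $c_t(0)=0$. The class $\mathcal{G}_T^n$ consists of all local resource allocation games $G$ of the following form: agent set $N=\{1,\dots,n\}$; a finite set of resources $\mathcal{R}$; for each $r\in\mathcal{R}$ a value $v_r\ge0$ and a type $(c,f)\in T$, giving $c_r=v_r c$ and $f_r=v_r f$; for each agent $i$ an action set $\mathcal{A}_i\subseteq 2^{\mathcal{R}}$, with $\mathcal{A}=\mathcal{A}_1\times\dots\times\mathcal{A}_n$. For $a\in\mathcal{A}$, $|a|_r$ is the number of agents $i$ with $r\in a_i$; the system cost is $C(a)=\sum_{r\in\mathcal{R}}c_r(|a|_r)$ and the local cost of agent $i$ is $J_i(a)=\sum_{r\in a_i}f_r(|a|_r)$. A Nash equilibrium is $a^{ne}\in\mathcal{A}$ with $J_i(a^{ne})\le J_i(a_i,a^{ne}_{-i})$ for all $a_i\in\mathcal{A}_i$, $i\in N$; $\mathrm{PoA}(G)=\max_{a\in\mathrm{NE}(G)}C(a)/\min_{a\in\mathcal{A}}C(a)$, and $\mathrm{PoA}(\mathcal{G}_T^n)=\sup_{G\in\mathcal{G}_T^n}\mathrm{PoA}(G)$.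 The generalized price-of-anarchy of the class is $\mathrm{GPoA}(\mathcal{G}_T^n)=\inf\{\lambda/(1-\mu):\lambda>0,\mu<1\}$ over those $(\lambda,\mu)$ such that for every $G\in\mathcal{G}_T^n$ and all $a,a'\in\mathcal{A}$: $\sum_{i=1}^nJ_i(a'_i,a_{-i})-\sum_{i=1}^nJ_i(a)+C(a)\le\lambda C(a')+\mu C(a)$. *)

theory Defs
  imports "HOL-Library.Extended_Real" "HOL-Library.FuncSet"
begin

text \<open>A resource type is a pair (c, f) of functions; only the values on 1..n matter,
  and c(0) = 0 is imposed by convention in resource_cost.\<close>
type_synonym rtype = "(nat \<Rightarrow> real) \<times> (nat \<Rightarrow> real)"

record lra_game =
  res  :: "nat set"
  val  :: "nat \<Rightarrow> real"
  rtyp  :: "nat \<Rightarrow> rtype"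
  acts :: "nat \<Rightarrow> nat set set"

definition in_class :: "rtype set \<Rightarrow> nat \<Rightarrow> lra_game \<Rightarrow> bool" where
  "in_class T n G \<longleftrightarrow>
     finite (res G) \<and>
     (\<forall>r\<in>res G. val G r \<ge> 0 \<and> rtyp G r \<in> T) \<and>
     (\<forall>i\<in>{1..n}. acts G i \<noteq> {} \<and> (\<forall>s\<in>acts G i. s \<subseteq> res G))"

definition allocs :: "nat \<Rightarrow> lra_game \<Rightarrow> (nat \<Rightarrow> nat set) set" where
  "allocs n G = (\<Pi>\<^sub>E i\<in>{1..n}. acts G i)"

definition load :: "nat \<Rightarrow> (nat \<Rightarrow> nat set) \<Rightarrow> nat \<Rightarrow> nat" where
  "load n a r = card {i\<in>{1..n}. r \<in> a i}"

definition res_cost :: "lra_game \<Rightarrow> nat \<Rightarrow> nat \<Rightarrow> real" where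
  "res_cost G r k = (if k = 0 then 0 else val G r * fst (rtyp G r) k)"

definition res_util :: "lra_game \<Rightarrow> nat \<Rightarrow> nat \<Rightarrow> real" where
  "res_util G r k = val G r * snd (rtyp G r) k"

definition sys_cost :: "nat \<Rightarrow> lra_game \<Rightarrow> (nat \<Rightarrow> nat set) \<Rightarrow> real" where
  "sys_cost n G a = (\<Sum>r\<in>res G. res_cost G r (load n a r))"

definition local_cost :: "nat \<Rightarrow> lra_game \<Rightarrow> nat \<Rightarrow> (nat \<Rightarrow> nat set) \<Rightarrow> real" where
  "local_cost n G i a = (\<Sum>r\<in>a i. res_util G r (load n a r))"

definition is_NE :: "nat \<Rightarrow> lra_game \<Rightarrow> (nat \<Rightarrow> nat set) \<Rightarrow> bool" where
  "is_NE n G a \<longleftrightarrow> a \<in> allocs n G \<and>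
     (\<forall>i\<in>{1..n}. \<forall>b\<in>acts G i. local_cost n G i a \<le> local_cost n G i (a(i := b)))"

definition cost_ratio :: "real \<Rightarrow> real \<Rightarrow> ereal" where
  "cost_ratio x opt = (if opt = 0 then (if x = 0 then 1 else \<infinity>) else ereal (x / opt))"

definition opt_cost :: "nat \<Rightarrow> lra_game \<Rightarrow> real" where
  "opt_cost n G = Min (sys_cost n G ` allocs n G)"

definition PoA :: "nat \<Rightarrow> lra_game \<Rightarrow> ereal" where
  "PoA n G = (SUP a\<in>{a. is_NE n G a}. cost_ratio (sys_cost n G a) (opt_cost n G))"

definition PoA_class :: "rtype set \<Rightarrow> nat \<Rightarrow> ereal" where
  "PoA_class T n = (SUP G\<in>{G. in_class T n G}. PoA n G)"

definition smooth_pair :: "rtype set \<Rightarrow> nat \<Rightarrow> real \<Rightarrow> real \<Rightarrow> bool" where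
  "smooth_pair T n lam mu \<longleftrightarrow> lam > 0 \<and> mu < 1 \<and>
     (\<forall>G. in_class T n G \<longrightarrow> (\<forall>a\<in>allocs n G. \<forall>a'\<in>allocs n G.
        (\<Sum>i\<in>{1..n}. local_cost n G i (a(i := a' i))) - (\<Sum>i\<in>{1..n}. local_cost n G i a)
          + sys_cost n G a \<le> lam * sys_cost n G a' + mu * sys_cost n G a))"

definition GPoA :: "rtype set \<Rightarrow> nat \<Rightarrow> ereal" where
  "GPoA T n = (INF p\<in>{(lam, mu). smooth_pair T n lam mu}. ereal (fst p / (1 - snd p)))"

end

theory Submission
  imports Defs
begin

lemma mod_cancel_lt:
  fixes a b m n :: nat
  assumes "a \<le> b" "b - a < n" "(a + m) mod n = (b + m) mod n"
  shows "a = b"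
proof -
  have "n dvd (b + m) - (a + m)" using assms mod_eq_dvd_iff_nat[of "a+m" "b+m" n] by simp
  then have "n dvd b - a" by simp
  then have "b - a = 0" using assms(2) by (metis dvd_imp_le not_less neq0_conv)
  then show ?thesis using assms(1) by simp
qed
lemma mod_cancel_sym:
  fixes a b m n :: nat
  assumes "a < b + n" "b < a + n" "(a + m) mod n = (b + m) mod n"
  shows "a = b"
proof (cases "a \<le> b")
  case True then show ?thesis using mod_cancel_lt[of a b n m] assms by simp
next
  case False
  have "b = a" by (rule mod_cancel_lt[of b a n m]) (use False assms in auto)
  then show ?thesis by simp
qed

lemma mod_inj_aux:
  fixes n i m m' :: nat
  assumes "m < n" "m' < n" "(i + m) mod n = (i + m') mod n"
  shows "m = m'"
  using assms mod_cancel_sym[of m m' n i] by (simp add: add.commute)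

definition hh :: "nat \<Rightarrow> nat \<Rightarrow> nat \<Rightarrow> nat" where
  "hh n q m = (if (q + n - m) mod n = 0 then n else (q + n - m) mod n)"

lemma hh_in: fixes q n m :: nat assumes "n > 0" shows "hh n q m \<in> {1..n}"
  using assms by (simp add: hh_def less_imp_le_nat)

lemma hh_q: fixes q n m :: nat assumes "m < n" "q < n" shows "(hh n q m + m) mod n = q"
proof -
  have "((q + n - m) mod n + m) mod n = (q + n - m + m) mod n" by (simp add: mod_add_left_eq)
  also have "q + n - m + m = q + n" using assms by simp
  finally have *: "((q + n - m) mod n + m) mod n = q" using assms by simp
  show ?thesis
  proof (cases "(q + n - m) mod n = 0")
    case True
    then have "m mod n = q" using * by simp
    then have "m = q" using assms by simp
    then show ?thesis using True assms by (simp add: hh_def)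
  next
    case False
    then show ?thesis using * by (simp add: hh_def)
  qed
qed

lemma mod_cancel_agents:
  fixes n i j m :: nat
  assumes "i \<in> {1..n}" "j \<in> {1..n}" "(i + m) mod n = (j + m) mod n"
  shows "i = j"
  using mod_cancel_sym[of i j n m] assms by auto

lemma count_res:
  fixes n i K1 K2 :: nat
  assumes "K2 \<le> n"
  shows "card {q. q < n \<and> (\<exists>m. K1 \<le> m \<and> m < K2 \<and> (i + m) mod n = q)} = K2 - K1"
proof -
  have seteq: "{q. q < n \<and> (\<exists>m. K1 \<le> m \<and> m < K2 \<and> (i + m) mod n = q)} = (\<lambda>m. (i+m) mod n) ` {K1..<K2}"
    using assms by auto
  have inj: "inj_on (\<lambda>m. (i+m) mod n) {K1..<K2}"
  proof
    fix x y assume "x \<in> {K1..<K2}" "y \<in> {K1..<K2}" "(i + x) mod n = (i + y) mod n"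
    then show "x = y" using mod_inj_aux[of x n y i] assms by auto
  qed
  show ?thesis unfolding seteq using card_image[OF inj] by simp
qed

lemma count_agents:
  fixes n q K1 K2 :: nat
  assumes "n > 0" "q < n" "K2 \<le> n"
  shows "card {i\<in>{1..n}. \<exists>m. K1 \<le> m \<and> m < K2 \<and> (i + m) mod n = q} = K2 - K1"
proof -
  have seteq: "{i\<in>{1..n}. \<exists>m. K1 \<le> m \<and> m < K2 \<and> (i + m) mod n = q} = hh n q ` {K1..<K2}"
  proof
    show "{i\<in>{1..n}. \<exists>m. K1 \<le> m \<and> m < K2 \<and> (i + m) mod n = q} \<subseteq> hh n q ` {K1..<K2}"
    proof
      fix i assume "i \<in> {i\<in>{1..n}. \<exists>m. K1 \<le> m \<and> m < K2 \<and> (i + m) mod n = q}"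
      then obtain m where m: "i \<in> {1..n}" "K1 \<le> m" "m < K2" "(i + m) mod n = q" by blast
      have "(i + m) mod n = (hh n q m + m) mod n" using hh_q[of m n q] m assms by simp
      then have "i = hh n q m" using mod_cancel_agents[OF m(1) hh_in[OF assms(1)]] by blast
      then show "i \<in> hh n q ` {K1..<K2}" using m by auto
    qed
    show "hh n q ` {K1..<K2} \<subseteq> {i\<in>{1..n}. \<exists>m. K1 \<le> m \<and> m < K2 \<and> (i + m) mod n = q}"
    proof
      fix i assume "i \<in> hh n q ` {K1..<K2}"
      then obtain m where "K1 \<le> m" "m < K2" "i = hh n q m" by auto
      then show "i \<in> {i\<in>{1..n}. \<exists>m. K1 \<le> m \<and> m < K2 \<and> (i + m) mod n = q}"
        using hh_in[OF assms(1), of q m] hh_q[of m n q] assms by auto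
    qed
  qed
  have inj: "inj_on (hh n q) {K1..<K2}"
  proof
    fix x y assume xy: "x \<in> {K1..<K2}" "y \<in> {K1..<K2}" "hh n q x = hh n q y"
    then have "(hh n q x + x) mod n = (hh n q x + y) mod n" using hh_q[of x n q] hh_q[of y n q] assms by auto
    then show "x = y" using mod_inj_aux[of x n y "hh n q x"] xy assms by auto
  qed
  show ?thesis unfolding seteq using card_image[OF inj] by simp
qed

lemma load_le: "load n a r \<le> n"
proof -
  have "card {i\<in>{1..n}. r \<in> a i} \<le> card {1..n}" by (rule card_mono) auto
  then show ?thesis by (simp add: load_def)
qed

lemma load_upd:
  assumes "i \<in> {1..n}" "r \<in> B"
  shows "load n (a(i := B)) r = load n a r + (if r \<in> a i then 0 else 1)"
proof (cases "r \<in> a i")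
  case True
  have "{j\<in>{1..n}. r \<in> (a(i := B)) j} = {j\<in>{1..n}. r \<in> a j}" using True assms by auto
  then show ?thesis using True by (simp add: load_def)
next
  case False
  have "{j\<in>{1..n}. r \<in> (a(i := B)) j} = insert i {j\<in>{1..n}. r \<in> a j}" using False assms by auto
  moreover have "i \<notin> {j\<in>{1..n}. r \<in> a j}" using False by auto
  ultimately show ?thesis using False by (simp add: load_def)
qed

lemma card_split2:
  fixes P Q :: "nat \<Rightarrow> bool"
  shows "card {i\<in>{1..n}. P i} = card {i\<in>{1..n}. P i \<and> \<not> Q i} + card {i\<in>{1..n}. P i \<and> Q i}"
proof -
  have "{i\<in>{1..n}. P i} = {i\<in>{1..n}. P i \<and> \<not> Q i} \<union> {i\<in>{1..n}. P i \<and> Q i}" by auto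
  moreover have "{i\<in>{1..n}. P i \<and> \<not> Q i} \<inter> {i\<in>{1..n}. P i \<and> Q i} = {}" by auto
  ultimately show ?thesis by (simp add: card_Un_disjoint)
qed

lemma card_split3:
  fixes P Q :: "nat \<Rightarrow> bool"
  shows "card {i\<in>{1..n}. P i \<and> \<not> Q i} + card {i\<in>{1..n}. P i \<and> Q i} + card {i\<in>{1..n}. \<not> P i \<and> Q i} \<le> n"
proof -
  let ?A = "{i\<in>{1..n}. P i \<and> \<not> Q i}" and ?X = "{i\<in>{1..n}. P i \<and> Q i}" and ?B = "{i\<in>{1..n}. \<not> P i \<and> Q i}"
  have "card (?A \<union> ?X \<union> ?B) = card ?A + card ?X + card ?B"
  proof -
    have f: "finite ?A" "finite ?X" "finite ?B" by auto
    have "card (?A \<union> ?X \<union> ?B) = card (?A \<union> ?X) + card ?B"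
      by (rule card_Un_disjoint) (use f in auto)
    also have "card (?A \<union> ?X) = card ?A + card ?X"
      by (rule card_Un_disjoint) (use f in auto)
    finally show ?thesis .
  qed
  moreover have "card (?A \<union> ?X \<union> ?B) \<le> card {1..n}" by (rule card_mono) auto
  ultimately show ?thesis by simp
qed

lemma sum_if_card:
  fixes c :: real
  assumes "finite A"
  shows "(\<Sum>i\<in>A. if P i then c else 0) = real (card {i\<in>A. P i}) * c"
proof -
  have "(\<Sum>i\<in>A. if P i then c else 0) = (\<Sum>i\<in>{i\<in>A. P i}. c)"
    using sum.inter_filter[OF assms, of "\<lambda>_. c" P] by simp
  then show ?thesis by simp
qed

lemma sum_local_dev:
  assumes "finite R" "\<forall>i\<in>{1..n}. a' i \<subseteq> R"
  shows "(\<Sum>i\<in>{1..n}. local_cost n G i (a(i := a' i))) =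
    (\<Sum>r\<in>R. real (card {i\<in>{1..n}. r \<in> a i \<and> r \<in> a' i}) * res_util G r (load n a r)
           + real (card {i\<in>{1..n}. r \<notin> a i \<and> r \<in> a' i}) * res_util G r (load n a r + 1))"
proof -
  define g where "g i r = (if r \<in> a' i then (if r \<in> a i then res_util G r (load n a r) else res_util G r (load n a r + 1)) else 0)" for i r
  have "local_cost n G i (a(i := a' i)) = (\<Sum>r\<in>R. g i r)" if i: "i \<in> {1..n}" for i
  proof -
    have "local_cost n G i (a(i := a' i)) = (\<Sum>r\<in>a' i. res_util G r (load n (a(i := a' i)) r))"
      by (simp add: local_cost_def)
    also have "\<dots> = (\<Sum>r\<in>a' i. g i r)"
      by (rule sum.cong) (auto simp: g_def load_upd[OF i])
    also have "\<dots> = (\<Sum>r\<in>R. g i r)"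
      by (rule sum.mono_neutral_left) (use assms i in \<open>auto simp: g_def\<close>)
    finally show ?thesis .
  qed
  then have "(\<Sum>i\<in>{1..n}. local_cost n G i (a(i := a' i))) = (\<Sum>i\<in>{1..n}. \<Sum>r\<in>R. g i r)"
    by (rule sum.cong[OF refl])
  also have "\<dots> = (\<Sum>r\<in>R. \<Sum>i\<in>{1..n}. g i r)" by (rule sum.swap)
  also have "\<dots> = (\<Sum>r\<in>R. real (card {i\<in>{1..n}. r \<in> a i \<and> r \<in> a' i}) * res_util G r (load n a r)
           + real (card {i\<in>{1..n}. r \<notin> a i \<and> r \<in> a' i}) * res_util G r (load n a r + 1))"
  proof (rule sum.cong[OF refl])
    fix r
    have "(\<Sum>i\<in>{1..n}. g i r) = (\<Sum>i\<in>{1..n}. (if r \<in> a i \<and> r \<in> a' i then res_util G r (load n a r) else 0)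
        + (if r \<notin> a i \<and> r \<in> a' i then res_util G r (load n a r + 1) else 0))"
      by (rule sum.cong) (auto simp: g_def)
    also have "\<dots> = real (card {i\<in>{1..n}. r \<in> a i \<and> r \<in> a' i}) * res_util G r (load n a r)
           + real (card {i\<in>{1..n}. r \<notin> a i \<and> r \<in> a' i}) * res_util G r (load n a r + 1)"
      by (simp add: sum.distrib sum_if_card)
    finally show "(\<Sum>i\<in>{1..n}. g i r) = \<dots>" .
  qed
  finally show ?thesis .
qed

lemma sum_local:
  assumes "finite R" "\<forall>i\<in>{1..n}. a i \<subseteq> R"
  shows "(\<Sum>i\<in>{1..n}. local_cost n G i a) = (\<Sum>r\<in>R. real (load n a r) * res_util G r (load n a r))"
proof -
  define g where "g i r = (if r \<in> a i then res_util G r (load n a r) else 0)" for i r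
  have "local_cost n G i a = (\<Sum>r\<in>R. g i r)" if i: "i \<in> {1..n}" for i
  proof -
    have "local_cost n G i a = (\<Sum>r\<in>a i. g i r)"
      by (simp add: local_cost_def g_def)
    also have "\<dots> = (\<Sum>r\<in>R. g i r)"
      by (rule sum.mono_neutral_left) (use assms i in \<open>auto simp: g_def\<close>)
    finally show ?thesis .
  qed
  then have "(\<Sum>i\<in>{1..n}. local_cost n G i a) = (\<Sum>i\<in>{1..n}. \<Sum>r\<in>R. g i r)"
    by (rule sum.cong[OF refl])
  also have "\<dots> = (\<Sum>r\<in>R. \<Sum>i\<in>{1..n}. g i r)" by (rule sum.swap)
  also have "\<dots> = (\<Sum>r\<in>R. real (load n a r) * res_util G r (load n a r))"
    by (rule sum.cong[OF refl]) (simp add: g_def sum_if_card load_def)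
  finally show ?thesis .
qed

definition cc :: "rtype \<Rightarrow> nat \<Rightarrow> real" where
  "cc t k = (if k = 0 then 0 else fst t k)"

lemma res_cost_cc: "res_cost G r k = val G r * cc (rtyp G r) k"
  by (simp add: res_cost_def cc_def)

definition Wn :: "nat \<Rightarrow> nat \<Rightarrow> nat \<Rightarrow> nat \<Rightarrow> nat set" where
  "Wn n K1 K2 i = (\<lambda>m. (i + m) mod n) ` {K1..<K2}"

lemma Wn_lt: "n > 0 \<Longrightarrow> q \<in> Wn n K1 K2 i \<Longrightarrow> q < n"
  by (auto simp: Wn_def)

lemma Wn_sum:
  assumes "K2 \<le> n"
  shows "(\<Sum>q\<in>Wn n K1 K2 i. h q) = (\<Sum>m\<in>{K1..<K2}. h ((i + m) mod n))"
proof -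
  have "inj_on (\<lambda>m. (i+m) mod n) {K1..<K2}"
  proof
    fix x y assume "x \<in> {K1..<K2}" "y \<in> {K1..<K2}" "(i + x) mod n = (i + y) mod n"
    then show "x = y" using mod_inj_aux[of x n y i] assms by auto
  qed
  then show ?thesis unfolding Wn_def by (simp add: sum.reindex)
qed

lemma Wn_mem_iff:
  assumes "m < n" "K2 \<le> n"
  shows "((i + m) mod n \<in> Wn n K1 K2 i) \<longleftrightarrow> K1 \<le> m \<and> m < K2"
proof
  assume "(i + m) mod n \<in> Wn n K1 K2 i"
  then obtain m' where "K1 \<le> m'" "m' < K2" "(i + m') mod n = (i + m) mod n" by (auto simp: Wn_def)
  then have "m' = m" using mod_inj_aux[of m' n m i] assms by auto
  then show "K1 \<le> m \<and> m < K2" using \<open>K1 \<le> m'\<close> \<open>m' < K2\<close> by simp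
qed (auto simp: Wn_def)

lemma Wn_load:
  assumes "n > 0" "q < n" "K2 \<le> n"
  shows "card {i\<in>{1..n}. q \<in> Wn n K1 K2 i} = K2 - K1"
proof -
  have "{i\<in>{1..n}. q \<in> Wn n K1 K2 i} = {i\<in>{1..n}. \<exists>m. K1 \<le> m \<and> m < K2 \<and> (i + m) mod n = q}"
    by (auto simp: Wn_def)
  then show ?thesis using count_agents[OF assms] by simp
qed

lemma Wn_card:
  assumes "K2 \<le> n"
  shows "card (Wn n K1 K2 i) = K2 - K1"
proof -
  have "(\<Sum>q\<in>Wn n K1 K2 i. (1::nat)) = (\<Sum>m\<in>{K1..<K2}. 1)" by (rule Wn_sum[OF assms])
  then show ?thesis by simp
qed

lemma sum_fam:
  fixes g :: "nat \<Rightarrow> real"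
  assumes "finite Q1" "finite Q2" "\<forall>q\<in>Q1. q < n"
  shows "(\<Sum>r\<in>Q1 \<union> (\<lambda>q. n + q) ` Q2. g r) = (\<Sum>q\<in>Q1. g q) + (\<Sum>q\<in>Q2. g (n + q))"
proof -
  have "Q1 \<inter> (\<lambda>q. n + q) ` Q2 = {}" using assms(3) by auto
  then have "(\<Sum>r\<in>Q1 \<union> (\<lambda>q. n + q) ` Q2. g r) = (\<Sum>q\<in>Q1. g q) + (\<Sum>r\<in>(\<lambda>q. n + q) ` Q2. g r)"
    using assms by (simp add: sum.union_disjoint)
  also have "(\<Sum>r\<in>(\<lambda>q. n + q) ` Q2. g r) = (\<Sum>q\<in>Q2. g (n + q))"
    by (simp add: sum.reindex)
  finally show ?thesis .
qed

lemma split_dev_sum: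
  fixes F0 F1 :: real
  shows "(\<Sum>m\<in>{A..<A+X+B}. if m < A + X then F0 else F1) = real X * F0 + real B * F1"
proof -
  have "(\<Sum>m\<in>{A..<A+X+B}. if m < A + X then F0 else F1)
      = (\<Sum>m\<in>{A..<A+X}. if m < A + X then F0 else F1) + (\<Sum>m\<in>{A+X..<A+X+B}. if m < A + X then F0 else F1)"
    by (rule sum.atLeastLessThan_concat[symmetric]) auto
  also have "(\<Sum>m\<in>{A..<A+X}. if m < A + X then F0 else F1) = (\<Sum>m\<in>{A..<A+X}. F0)"
    by (rule sum.cong) auto
  also have "(\<Sum>m\<in>{A+X..<A+X+B}. if m < A + X then F0 else F1) = (\<Sum>m\<in>{A+X..<A+X+B}. F1)"
    by (rule sum.cong) auto
  finally show ?thesis by simp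
qed

locale circ =
  fixes n :: nat and t1 t2 :: rtype and A1 X1 B1 A2 X2 B2 :: nat and th1 th2 :: real
  assumes npos: "n > 0" and w1: "A1 + X1 + B1 \<le> n" and w2: "A2 + X2 + B2 \<le> n"
begin

definition S :: "nat \<Rightarrow> nat set" where
  "S i = Wn n 0 (A1 + X1) i \<union> (\<lambda>q. n + q) ` Wn n 0 (A2 + X2) i"
definition P :: "nat \<Rightarrow> nat set" where
  "P i = Wn n A1 (A1 + X1 + B1) i \<union> (\<lambda>q. n + q) ` Wn n A2 (A2 + X2 + B2) i"
definition RR :: "nat set" where
  "RR = {..<n} \<union> (\<lambda>q. n + q) ` {..<n}"
definition Gm :: lra_game where
  "Gm = \<lparr>res = RR, val = (\<lambda>r. if r < n then th1 else th2), rtyp = (\<lambda>r. if r < n then t1 else t2),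
         acts = (\<lambda>i. {S i, P i})\<rparr>"
definition aS :: "nat \<Rightarrow> nat set" where "aS = (\<lambda>i\<in>{1..n}. S i)"
definition aP :: "nat \<Rightarrow> nat set" where "aP = (\<lambda>i\<in>{1..n}. P i)"

lemma Wn_sub: "Wn n K1 K2 i \<subseteq> {..<n}"
  using npos by (auto simp: Wn_def)

lemma fin_Wn: "finite (Wn n K1 K2 i)" by (simp add: Wn_def)

lemma S_sub: "S i \<subseteq> RR" unfolding S_def RR_def by (intro Un_mono image_mono Wn_sub)
lemma P_sub: "P i \<subseteq> RR" unfolding P_def RR_def by (intro Un_mono image_mono Wn_sub)

lemma card_RR: "card RR \<le> 2 * n"
proof -
  have "card RR \<le> card {..<n} + card ((\<lambda>q. n + q) ` {..<n})" unfolding RR_def by (rule card_Un_le)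
  also have "\<dots> \<le> n + n" using card_image_le[of "{..<n}" "\<lambda>q. n + q"] by simp
  finally show ?thesis by simp
qed

lemma in_class_Gm:
  assumes "t1 \<in> T" "t2 \<in> T" "th1 \<ge> 0" "th2 \<ge> 0"
  shows "in_class T n Gm"
  using assms S_sub P_sub by (auto simp: in_class_def Gm_def RR_def)

lemma allocs_aS: "aS \<in> allocs n Gm" by (auto simp: allocs_def aS_def Gm_def)
lemma allocs_aP: "aP \<in> allocs n Gm" by (auto simp: allocs_def aP_def Gm_def)

lemma mem_low: "q < n \<Longrightarrow> q \<in> Q1 \<union> (\<lambda>q. n + q) ` Q2 \<longleftrightarrow> q \<in> Q1" by auto
lemma mem_high: "Q1 \<subseteq> {..<n} \<Longrightarrow> n + q \<in> Q1 \<union> (\<lambda>q. n + q) ` Q2 \<longleftrightarrow> q \<in> Q2" by auto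

lemma load_aS_low: "q < n \<Longrightarrow> load n aS q = A1 + X1"
proof -
  assume q: "q < n"
  have "{i\<in>{1..n}. q \<in> aS i} = {i\<in>{1..n}. q \<in> Wn n 0 (A1 + X1) i}"
    using q by (auto simp: aS_def S_def)
  then show ?thesis using Wn_load[OF npos q, of "A1 + X1" 0] w1 by (simp add: load_def)
qed

lemma load_aS_high: "q < n \<Longrightarrow> load n aS (n + q) = A2 + X2"
proof -
  assume q: "q < n"
  have "{i\<in>{1..n}. n + q \<in> aS i} = {i\<in>{1..n}. q \<in> Wn n 0 (A2 + X2) i}"
    using Wn_sub by (auto simp: aS_def S_def)
  then show ?thesis using Wn_load[OF npos q, of "A2 + X2" 0] w2 by (simp add: load_def)
qed

lemma load_aP_low: "q < n \<Longrightarrow> load n aP q = X1 + B1"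
proof -
  assume q: "q < n"
  have "{i\<in>{1..n}. q \<in> aP i} = {i\<in>{1..n}. q \<in> Wn n A1 (A1 + X1 + B1) i}"
    using q by (auto simp: aP_def P_def)
  then show ?thesis using Wn_load[OF npos q, of "A1 + X1 + B1" A1] w1 by (simp add: load_def)
qed

lemma load_aP_high: "q < n \<Longrightarrow> load n aP (n + q) = X2 + B2"
proof -
  assume q: "q < n"
  have "{i\<in>{1..n}. n + q \<in> aP i} = {i\<in>{1..n}. q \<in> Wn n A2 (A2 + X2 + B2) i}"
    using Wn_sub by (auto simp: aP_def P_def)
  then show ?thesis using Wn_load[OF npos q, of "A2 + X2 + B2" A2] w2 by (simp add: load_def)
qed

lemma sum_RR:
  fixes g :: "nat \<Rightarrow> real"
  shows "(\<Sum>r\<in>RR. g r) = (\<Sum>q<n. g q) + (\<Sum>q<n. g (n + q))"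
  unfolding RR_def by (rule sum_fam) auto

lemma cost_aS: "sys_cost n Gm aS = real n * (th1 * cc t1 (A1 + X1) + th2 * cc t2 (A2 + X2))"
proof -
  have "sys_cost n Gm aS = (\<Sum>q<n. th1 * cc t1 (A1 + X1)) + (\<Sum>q<n. th2 * cc t2 (A2 + X2))"
    unfolding sys_cost_def res_cost_cc
    by (simp add: Gm_def sum_RR load_aS_low load_aS_high)
  then show ?thesis by (simp add: algebra_simps)
qed

lemma cost_aP: "sys_cost n Gm aP = real n * (th1 * cc t1 (X1 + B1) + th2 * cc t2 (X2 + B2))"
proof -
  have "sys_cost n Gm aP = (\<Sum>q<n. th1 * cc t1 (X1 + B1)) + (\<Sum>q<n. th2 * cc t2 (X2 + B2))"
    unfolding sys_cost_def res_cost_cc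
    by (simp add: Gm_def sum_RR load_aP_low load_aP_high)
  then show ?thesis by (simp add: algebra_simps)
qed

end

context circ begin

lemma aS_i: "i \<in> {1..n} \<Longrightarrow> aS i = S i" by (simp add: aS_def)

lemma lc_aS:
  assumes i: "i \<in> {1..n}"
  shows "local_cost n Gm i aS = real (A1 + X1) * (th1 * snd t1 (A1 + X1)) + real (A2 + X2) * (th2 * snd t2 (A2 + X2))"
proof -
  have "local_cost n Gm i aS = (\<Sum>r\<in>S i. res_util Gm r (load n aS r))"
    by (simp add: local_cost_def aS_i[OF i])
  also have "\<dots> = (\<Sum>q\<in>Wn n 0 (A1 + X1) i. res_util Gm q (load n aS q))
      + (\<Sum>q\<in>Wn n 0 (A2 + X2) i. res_util Gm (n + q) (load n aS (n + q)))"
    unfolding S_def by (rule sum_fam) (auto simp: fin_Wn intro: Wn_lt[OF npos])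
  also have "(\<Sum>q\<in>Wn n 0 (A1 + X1) i. res_util Gm q (load n aS q)) = (\<Sum>q\<in>Wn n 0 (A1 + X1) i. th1 * snd t1 (A1 + X1))"
    by (rule sum.cong[OF refl]) (use Wn_sub in \<open>auto simp: res_util_def Gm_def load_aS_low\<close>)
  also have "(\<Sum>q\<in>Wn n 0 (A2 + X2) i. res_util Gm (n + q) (load n aS (n + q))) = (\<Sum>q\<in>Wn n 0 (A2 + X2) i. th2 * snd t2 (A2 + X2))"
    by (rule sum.cong[OF refl]) (auto simp: res_util_def Gm_def load_aS_high dest: Wn_lt[OF npos])
  finally show ?thesis using Wn_card[of "A1 + X1" n 0 i] Wn_card[of "A2 + X2" n 0 i] w1 w2 by simp
qed

lemma fam_dev:
  fixes th :: real and f :: "nat \<Rightarrow> real" and L :: nat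
  assumes "A + X + B \<le> n"
  shows "(\<Sum>q\<in>Wn n A (A + X + B) i. th * f (L + (if q \<in> Wn n 0 (A + X) i then 0 else 1)))
     = real X * (th * f L) + real B * (th * f (L + 1))"
proof -
  have "(\<Sum>q\<in>Wn n A (A + X + B) i. th * f (L + (if q \<in> Wn n 0 (A + X) i then 0 else 1)))
      = (\<Sum>m\<in>{A..<A + X + B}. th * f (L + (if (i + m) mod n \<in> Wn n 0 (A + X) i then 0 else 1)))"
    by (rule Wn_sum[OF assms])
  also have "\<dots> = (\<Sum>m\<in>{A..<A + X + B}. if m < A + X then th * f L else th * f (L + 1))"
  proof (rule sum.cong[OF refl])
    fix m assume "m \<in> {A..<A + X + B}"
    then have "m < n" using assms by auto
    then have "((i + m) mod n \<in> Wn n 0 (A + X) i) = (m < A + X)"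
      using Wn_mem_iff[of m n "A + X" i 0] assms by auto
    then show "th * f (L + (if (i + m) mod n \<in> Wn n 0 (A + X) i then 0 else 1)) = (if m < A + X then th * f L else th * f (L + 1))"
      by (cases "m < A + X") simp_all
  qed
  also have "\<dots> = real X * (th * f L) + real B * (th * f (L + 1))" by (rule split_dev_sum)
  finally show ?thesis .
qed

lemma lc_dev:
  assumes i: "i \<in> {1..n}"
  shows "local_cost n Gm i (aS(i := P i)) =
     real X1 * (th1 * snd t1 (A1 + X1)) + real B1 * (th1 * snd t1 (A1 + X1 + 1))
   + (real X2 * (th2 * snd t2 (A2 + X2)) + real B2 * (th2 * snd t2 (A2 + X2 + 1)))"
proof -
  let ?a = "aS(i := P i)"
  have "local_cost n Gm i ?a = (\<Sum>r\<in>P i. res_util Gm r (load n aS r + (if r \<in> S i then 0 else 1)))"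
    unfolding local_cost_def using load_upd[OF i] aS_i[OF i] by simp
  also have "\<dots> = (\<Sum>q\<in>Wn n A1 (A1 + X1 + B1) i. res_util Gm q (load n aS q + (if q \<in> S i then 0 else 1)))
      + (\<Sum>q\<in>Wn n A2 (A2 + X2 + B2) i. res_util Gm (n + q) (load n aS (n + q) + (if n + q \<in> S i then 0 else 1)))"
    unfolding P_def by (rule sum_fam) (auto simp: fin_Wn intro: Wn_lt[OF npos])
  also have "(\<Sum>q\<in>Wn n A1 (A1 + X1 + B1) i. res_util Gm q (load n aS q + (if q \<in> S i then 0 else 1)))
      = (\<Sum>q\<in>Wn n A1 (A1 + X1 + B1) i. th1 * snd t1 (A1 + X1 + (if q \<in> Wn n 0 (A1 + X1) i then 0 else 1)))"
  proof (rule sum.cong[OF refl])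
    fix q assume "q \<in> Wn n A1 (A1 + X1 + B1) i"
    then have q: "q < n" using Wn_sub by auto
    have "q \<in> S i \<longleftrightarrow> q \<in> Wn n 0 (A1 + X1) i" using q by (auto simp: S_def)
    then show "res_util Gm q (load n aS q + (if q \<in> S i then 0 else 1)) = th1 * snd t1 (A1 + X1 + (if q \<in> Wn n 0 (A1 + X1) i then 0 else 1))"
      using q by (simp add: res_util_def Gm_def load_aS_low)
  qed
  also have "(\<Sum>q\<in>Wn n A2 (A2 + X2 + B2) i. res_util Gm (n + q) (load n aS (n + q) + (if n + q \<in> S i then 0 else 1)))
      = (\<Sum>q\<in>Wn n A2 (A2 + X2 + B2) i. th2 * snd t2 (A2 + X2 + (if q \<in> Wn n 0 (A2 + X2) i then 0 else 1)))"
  proof (rule sum.cong[OF refl])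
    fix q assume "q \<in> Wn n A2 (A2 + X2 + B2) i"
    then have q: "q < n" using Wn_sub by auto
    have "n + q \<in> S i \<longleftrightarrow> q \<in> Wn n 0 (A2 + X2) i" using Wn_sub[of 0 "A1 + X1" i] by (auto simp: S_def)
    then show "res_util Gm (n + q) (load n aS (n + q) + (if n + q \<in> S i then 0 else 1)) = th2 * snd t2 (A2 + X2 + (if q \<in> Wn n 0 (A2 + X2) i then 0 else 1))"
      using q by (simp add: res_util_def Gm_def load_aS_high)
  qed
  finally show ?thesis unfolding fam_dev[OF w1, where i=i and th=th1 and f="snd t1" and L="A1 + X1"] fam_dev[OF w2, where i=i and th=th2 and f="snd t2" and L="A2 + X2"] .
qed

lemma NE_aS:
  assumes "th1 * (real B1 * snd t1 (A1 + X1 + 1) - real A1 * snd t1 (A1 + X1))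
         + th2 * (real B2 * snd t2 (A2 + X2 + 1) - real A2 * snd t2 (A2 + X2)) \<ge> 0"
  shows "is_NE n Gm aS"
  unfolding is_NE_def
proof (intro conjI ballI)
  show "aS \<in> allocs n Gm" by (rule allocs_aS)
  fix i b assume i: "i \<in> {1..n}" and b: "b \<in> acts Gm i"
  then have "b = S i \<or> b = P i" by (simp add: Gm_def)
  then show "local_cost n Gm i aS \<le> local_cost n Gm i (aS(i := b))"
  proof
    assume "b = S i"
    then have "aS(i := b) = aS" using aS_i[OF i] fun_upd_triv by metis
    then show ?thesis by simp
  next
    assume "b = P i"
    then show ?thesis using lc_aS[OF i] lc_dev[OF i] assms by (simp add: algebra_simps)
  qed
qed

end

definition colN :: "rtype \<times> nat \<times> nat \<times> nat \<Rightarrow> real" where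
  "colN j = (case j of (t, a, x, b) \<Rightarrow> cc t (a + x))"
definition colO :: "rtype \<times> nat \<times> nat \<times> nat \<Rightarrow> real" where
  "colO j = (case j of (t, a, x, b) \<Rightarrow> cc t (x + b))"
definition colD :: "rtype \<times> nat \<times> nat \<times> nat \<Rightarrow> real" where
  "colD j = (case j of (t, a, x, b) \<Rightarrow> real b * snd t (a + x + 1) - real a * snd t (a + x))"
definition Cols :: "rtype set \<Rightarrow> nat \<Rightarrow> (rtype \<times> nat \<times> nat \<times> nat) set" where
  "Cols T n = {(t, a, x, b). t \<in> T \<and> a + x + b \<le> n}"

lemma finite_Cols: "finite T \<Longrightarrow> finite (Cols T n)"
proof -
  assume "finite T"
  have "Cols T n \<subseteq> T \<times> {..n} \<times> {..n} \<times> {..n}" by (auto simp: Cols_def)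
  moreover have "finite (T \<times> {..n} \<times> {..n} \<times> {..n})" using \<open>finite T\<close> by simp
  ultimately show ?thesis by (rule finite_subset)
qed

lemma game_exists:
  assumes n: "n > 0"
    and j1: "(t1, A1, X1, B1) \<in> Cols T n" and j2: "(t2, A2, X2, B2) \<in> Cols T n"
    and th: "th1 \<ge> 0" "th2 \<ge> 0"
    and D: "th1 * colD (t1, A1, X1, B1) + th2 * colD (t2, A2, X2, B2) \<ge> 0"
  shows "\<exists>G. in_class T n G \<and> card (res G) \<le> 2 * n \<and>
     (\<exists>a. is_NE n G a \<and> sys_cost n G a = real n * (th1 * colN (t1, A1, X1, B1) + th2 * colN (t2, A2, X2, B2))) \<and>
     (\<exists>a'\<in>allocs n G. sys_cost n G a' = real n * (th1 * colO (t1, A1, X1, B1) + th2 * colO (t2, A2, X2, B2)))"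
proof -
  interpret circ n t1 t2 A1 X1 B1 A2 X2 B2 th1 th2
    using n j1 j2 by unfold_locales (auto simp: Cols_def)
  show ?thesis
  proof (intro exI conjI)
    show "in_class T n Gm" by (rule in_class_Gm) (use j1 j2 th in \<open>auto simp: Cols_def\<close>)
    show "card (res Gm) \<le> 2 * n" using card_RR by (simp add: Gm_def)
    show "is_NE n Gm aS" by (rule NE_aS) (use D in \<open>simp add: colD_def\<close>)
    show "sys_cost n Gm aS = real n * (th1 * colN (t1, A1, X1, B1) + th2 * colN (t2, A2, X2, B2))"
      by (simp add: cost_aS colN_def)
    show "\<exists>a'\<in>allocs n Gm. sys_cost n Gm a' = real n * (th1 * colO (t1, A1, X1, B1) + th2 * colO (t2, A2, X2, B2))"
      by (rule bexI[OF _ allocs_aP]) (simp add: cost_aP colO_def)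
  qed
qed

lemma cc_nonneg: "\<forall>t\<in>T. \<forall>k\<in>{1..n}. fst t k > 0 \<Longrightarrow> t \<in> T \<Longrightarrow> k \<le> n \<Longrightarrow> cc t k \<ge> 0"
  by (cases "k = 0") (auto simp: cc_def intro: less_imp_le)

lemma cc_pos: "\<forall>t\<in>T. \<forall>k\<in>{1..n}. fst t k > 0 \<Longrightarrow> t \<in> T \<Longrightarrow> 1 \<le> k \<Longrightarrow> k \<le> n \<Longrightarrow> cc t k > 0"
  by (auto simp: cc_def)

lemma sys_cost_nonneg:
  assumes hpos: "\<forall>t\<in>T. \<forall>k\<in>{1..n}. fst t k > 0" and G: "in_class T n G"
  shows "sys_cost n G a \<ge> 0"
  unfolding sys_cost_def res_cost_cc
proof (rule sum_nonneg)
  fix r assume r: "r \<in> res G"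
  have "val G r \<ge> 0" "rtyp G r \<in> T" using G r by (auto simp: in_class_def)
  moreover have "cc (rtyp G r) (load n a r) \<ge> 0"
    using cc_nonneg[OF hpos \<open>rtyp G r \<in> T\<close> load_le] .
  ultimately show "val G r * cc (rtyp G r) (load n a r) \<ge> 0" by simp
qed

lemma allocs_props:
  assumes G: "in_class T n G"
  shows "finite (allocs n G)" "allocs n G \<noteq> {}"
proof -
  have "finite (res G)" using G by (simp add: in_class_def)
  have "acts G i \<subseteq> Pow (res G)" if "i \<in> {1..n}" for i
  proof -
    have "\<forall>s\<in>acts G i. s \<subseteq> res G" using G that unfolding in_class_def by blast
    then show ?thesis by blast
  qed
  then have "finite (acts G i)" if "i \<in> {1..n}" for i
    using that \<open>finite (res G)\<close> by (meson finite_Pow_iff finite_subset)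
  then show "finite (allocs n G)" unfolding allocs_def by (intro finite_PiE) auto
  show "allocs n G \<noteq> {}" using G unfolding allocs_def in_class_def by (simp add: PiE_eq_empty_iff)
qed

lemma opt_exists:
  assumes "in_class T n G"
  shows "\<exists>a'\<in>allocs n G. sys_cost n G a' = opt_cost n G"
proof -
  have "opt_cost n G \<in> sys_cost n G ` allocs n G"
    unfolding opt_cost_def using allocs_props[OF assms] by (intro Min_in) auto
  then show ?thesis by auto
qed

lemma opt_le:
  assumes "in_class T n G" "a \<in> allocs n G"
  shows "opt_cost n G \<le> sys_cost n G a"
  unfolding opt_cost_def using allocs_props[OF assms(1)] assms(2) by (intro Min_le) auto

lemma ratio_le:
  assumes "C \<ge> 0" "opt \<ge> 0" "\<rho> \<ge> 1" "C \<le> \<rho> * opt"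
  shows "cost_ratio C opt \<le> ereal \<rho>"
proof (cases "opt = 0")
  case True
  then have "C = 0" using assms by simp
  then show ?thesis using True assms by (simp add: cost_ratio_def)
next
  case False
  then have "opt > 0" using assms by simp
  then have "C / opt \<le> \<rho>" using assms by (simp add: divide_le_eq)
  then show ?thesis using False by (simp add: cost_ratio_def)
qed

lemma ratio_ge:
  assumes "C \<ge> 0" "opt \<ge> 0" "opt \<le> Ob" "Ob > 0"
  shows "ereal (C / Ob) \<le> cost_ratio C opt"
proof (cases "opt = 0")
  case True
  show ?thesis
  proof (cases "C = 0")
    case True
    then show ?thesis using \<open>opt = 0\<close> by (simp add: cost_ratio_def)
  next
    case False
    then show ?thesis using \<open>opt = 0\<close> by (simp add: cost_ratio_def)
  qed
next
  case False
  then have "opt > 0" using assms by simp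
  then have "C / Ob \<le> C / opt" using assms by (intro divide_left_mono) auto
  then show ?thesis using False by (simp add: cost_ratio_def)
qed

lemma smooth_ge1:
  assumes hpos: "\<forall>t\<in>T. \<forall>k\<in>{1..n}. fst t k > 0" and T: "T \<noteq> {}" and n: "n > 0"
    and sm: "smooth_pair T n l m"
  shows "l + m \<ge> 1"
proof -
  obtain t0 where t0: "t0 \<in> T" using T by auto
  have j: "(t0, 0, 1, 0) \<in> Cols T n" using t0 n by (auto simp: Cols_def)
  obtain G where G: "in_class T n G"
    and ex: "\<exists>a. is_NE n G a \<and> sys_cost n G a = real n * (1 * colN (t0, 0, 1, 0) + 0 * colN (t0, 0, 1, 0))"
    using game_exists[OF n j j, of 1 0] by (auto simp: colD_def)
  then obtain a where a: "is_NE n G a" and Ca: "sys_cost n G a = real n * cc t0 1"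
    by (auto simp: colN_def)
  have aa: "a \<in> allocs n G" using a by (simp add: is_NE_def)
  have pos: "sys_cost n G a > 0" using Ca cc_pos[OF hpos t0, of 1] n by simp
  have "(\<Sum>i\<in>{1..n}. local_cost n G i (a(i := a i))) - (\<Sum>i\<in>{1..n}. local_cost n G i a)
          + sys_cost n G a \<le> l * sys_cost n G a + m * sys_cost n G a"
    using sm G aa unfolding smooth_pair_def by blast
  then have "sys_cost n G a * 1 \<le> sys_cost n G a * (l + m)" by (simp add: algebra_simps)
  then show ?thesis using pos by (simp only: mult_le_cancel_left_pos)
qed

lemma PoA_le_smooth:
  assumes hpos: "\<forall>t\<in>T. \<forall>k\<in>{1..n}. fst t k > 0" and T: "T \<noteq> {}" and n: "n > 0"
    and sm: "smooth_pair T n l m" and G: "in_class T n G"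
  shows "PoA n G \<le> ereal (l / (1 - m))"
  unfolding PoA_def
proof (rule SUP_least)
  fix a assume "a \<in> {a. is_NE n G a}"
  then have NE: "is_NE n G a" by simp
  then have aa: "a \<in> allocs n G" by (simp add: is_NE_def)
  obtain a' where a': "a' \<in> allocs n G" "sys_cost n G a' = opt_cost n G" using opt_exists[OF G] by blast
  have lm: "l > 0" "m < 1" using sm by (auto simp: smooth_pair_def)
  have ge1: "l + m \<ge> 1" by (rule smooth_ge1[OF hpos T n sm])
  have smi: "(\<Sum>i\<in>{1..n}. local_cost n G i (a(i := a' i))) - (\<Sum>i\<in>{1..n}. local_cost n G i a)
          + sys_cost n G a \<le> l * sys_cost n G a' + m * sys_cost n G a"
    using sm G aa a'(1) unfolding smooth_pair_def by blast
  have "(\<Sum>i\<in>{1..n}. local_cost n G i a) \<le> (\<Sum>i\<in>{1..n}. local_cost n G i (a(i := a' i)))"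
  proof (rule sum_mono)
    fix i assume i: "i \<in> {1..n}"
    have "a' i \<in> acts G i" using a'(1) i by (auto simp: allocs_def)
    then show "local_cost n G i a \<le> local_cost n G i (a(i := a' i))" using NE i by (simp add: is_NE_def)
  qed
  then have "(1 - m) * sys_cost n G a \<le> l * opt_cost n G" using smi a'(2) by (simp add: algebra_simps)
  then have le: "sys_cost n G a \<le> (l / (1 - m)) * opt_cost n G" using lm
    by (simp add: field_simps)
  have "l / (1 - m) \<ge> 1" using lm ge1 by (simp add: field_simps)
  then show "cost_ratio (sys_cost n G a) (opt_cost n G) \<le> ereal (l / (1 - m))"
    using ratio_le[OF sys_cost_nonneg[OF hpos G] _ _ le] sys_cost_nonneg[OF hpos G, of a'] a'(2) by simp
qed

lemma class_le_GPoA: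
  assumes hpos: "\<forall>t\<in>T. \<forall>k\<in>{1..n}. fst t k > 0" and T: "T \<noteq> {}" and n: "n > 0"
  shows "PoA_class T n \<le> GPoA T n"
  unfolding PoA_class_def GPoA_def
proof (rule SUP_least, rule INF_greatest)
  fix G p assume G: "G \<in> {G. in_class T n G}" and p: "p \<in> {(lam, mu). smooth_pair T n lam mu}"
  obtain l m where "p = (l, m)" by (cases p)
  then have "smooth_pair T n l m" using p by simp
  then show "PoA n G \<le> ereal (fst p / (1 - snd p))"
    using PoA_le_smooth[OF hpos T n _] G \<open>p = (l, m)\<close> by simp
qed

lemma smooth_from_cols:
  assumes hpos: "\<forall>t\<in>T. \<forall>k\<in>{1..n}. fst t k > 0"
    and nu: "\<nu> > 0" and rho: "\<rho> > 0"
    and cols: "\<forall>j\<in>Cols T n. colN j + \<nu> * colD j \<le> \<rho> * colO j"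
  shows "smooth_pair T n (\<rho> / \<nu>) (1 - 1 / \<nu>)"
  unfolding smooth_pair_def
proof (intro conjI allI impI ballI)
  show "\<rho> / \<nu> > 0" using nu rho by simp
  show "1 - 1 / \<nu> < 1" using nu by simp
  fix G a a' assume G: "in_class T n G" and aa: "a \<in> allocs n G" and aa': "a' \<in> allocs n G"
  let ?l = "\<rho> / \<nu>" and ?m = "1 - 1 / \<nu>"
  let ?R = "res G"
  have finR: "finite ?R" using G by (simp add: in_class_def)
  have subs: "\<forall>i\<in>{1..n}. a i \<subseteq> ?R" "\<forall>i\<in>{1..n}. a' i \<subseteq> ?R"
    using G aa aa' unfolding in_class_def allocs_def by (auto simp: PiE_iff)
  define Ar where "Ar r = card {i\<in>{1..n}. r \<in> a i \<and> r \<notin> a' i}" for r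
  define Xr where "Xr r = card {i\<in>{1..n}. r \<in> a i \<and> r \<in> a' i}" for r
  define Br where "Br r = card {i\<in>{1..n}. r \<notin> a i \<and> r \<in> a' i}" for r
  have La: "load n a r = Ar r + Xr r" for r
    unfolding load_def Ar_def Xr_def by (rule card_split2)
  have La': "load n a' r = Xr r + Br r" for r
  proof -
    have "load n a' r = card {i\<in>{1..n}. r \<in> a' i \<and> r \<notin> a i} + card {i\<in>{1..n}. r \<in> a' i \<and> r \<in> a i}"
      unfolding load_def by (rule card_split2)
    moreover have "{i\<in>{1..n}. r \<in> a' i \<and> r \<notin> a i} = {i\<in>{1..n}. r \<notin> a i \<and> r \<in> a' i}" by auto
    moreover have "{i\<in>{1..n}. r \<in> a' i \<and> r \<in> a i} = {i\<in>{1..n}. r \<in> a i \<and> r \<in> a' i}" by auto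
    ultimately show ?thesis by (simp add: Xr_def Br_def)
  qed
  have sum3: "Ar r + Xr r + Br r \<le> n" for r
    unfolding Ar_def Xr_def Br_def by (rule card_split3)
  have h1: "(\<Sum>i\<in>{1..n}. local_cost n G i (a(i := a' i))) =
      (\<Sum>r\<in>?R. real (Xr r) * res_util G r (load n a r) + real (Br r) * res_util G r (load n a r + 1))"
    unfolding Xr_def Br_def by (rule sum_local_dev[OF finR subs(2)])
  have h2: "(\<Sum>i\<in>{1..n}. local_cost n G i a) = (\<Sum>r\<in>?R. real (load n a r) * res_util G r (load n a r))"
    by (rule sum_local[OF finR subs(1)])
  have per: "real (Xr r) * res_util G r (load n a r) + real (Br r) * res_util G r (load n a r + 1)
        - real (load n a r) * res_util G r (load n a r) + res_cost G r (load n a r)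
      \<le> ?l * res_cost G r (load n a' r) + ?m * res_cost G r (load n a r)" if r: "r \<in> ?R" for r
  proof -
    let ?t = "rtyp G r" and ?v = "val G r"
    have tT: "?t \<in> T" and v: "?v \<ge> 0" using G r by (auto simp: in_class_def)
    have jc: "(?t, Ar r, Xr r, Br r) \<in> Cols T n" using tT sum3[of r] by (simp add: Cols_def)
    have c: "cc ?t (Ar r + Xr r) + \<nu> * (real (Br r) * snd ?t (Ar r + Xr r + 1) - real (Ar r) * snd ?t (Ar r + Xr r))
        \<le> \<rho> * cc ?t (Xr r + Br r)"
      using cols[rule_format, OF jc] by (simp add: colN_def colD_def colO_def)
    define N where "N = cc ?t (Ar r + Xr r)"
    define D where "D = real (Br r) * snd ?t (Ar r + Xr r + 1) - real (Ar r) * snd ?t (Ar r + Xr r)"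
    define Ob where "Ob = cc ?t (Xr r + Br r)"
    have c': "N + \<nu> * D \<le> \<rho> * Ob" using c by (simp add: N_def D_def Ob_def)
    have "D + N \<le> ?l * Ob + ?m * N"
    proof -
      have "(N + \<nu> * D) / \<nu> \<le> (\<rho> * Ob) / \<nu>" using c' nu by (intro divide_right_mono) auto
      moreover have "(N + \<nu> * D) / \<nu> = N / \<nu> + D" using nu by (simp add: add_divide_distrib)
      moreover have "(\<rho> * Ob) / \<nu> = \<rho> / \<nu> * Ob" by simp
      ultimately have "N / \<nu> + D \<le> \<rho> / \<nu> * Ob" by linarith
      then show ?thesis by (simp add: algebra_simps)
    qed
    then have "?v * (D + N) \<le> ?v * (?l * Ob + ?m * N)" using v by (rule mult_left_mono)
    moreover have "real (Xr r) * res_util G r (load n a r) + real (Br r) * res_util G r (load n a r + 1)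
        - real (load n a r) * res_util G r (load n a r) + res_cost G r (load n a r) = ?v * (D + N)"
      by (simp add: La res_util_def res_cost_cc D_def N_def algebra_simps)
    moreover have "?l * res_cost G r (load n a' r) + ?m * res_cost G r (load n a r) = ?v * (?l * Ob + ?m * N)"
      by (simp add: La La' res_cost_cc Ob_def N_def algebra_simps)
    ultimately show ?thesis by simp
  qed
  have "(\<Sum>i\<in>{1..n}. local_cost n G i (a(i := a' i))) - (\<Sum>i\<in>{1..n}. local_cost n G i a) + sys_cost n G a
      = (\<Sum>r\<in>?R. real (Xr r) * res_util G r (load n a r) + real (Br r) * res_util G r (load n a r + 1)
        - real (load n a r) * res_util G r (load n a r) + res_cost G r (load n a r))"
    unfolding h1 h2 sys_cost_def by (simp add: sum_subtractf sum.distrib)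
  also have "\<dots> \<le> (\<Sum>r\<in>?R. ?l * res_cost G r (load n a' r) + ?m * res_cost G r (load n a r))"
    by (rule sum_mono) (rule per)
  also have "\<dots> = ?l * sys_cost n G a' + ?m * sys_cost n G a"
    unfolding sys_cost_def by (simp add: sum.distrib sum_distrib_left)
  finally show "(\<Sum>i\<in>{1..n}. local_cost n G i (a(i := a' i))) - (\<Sum>i\<in>{1..n}. local_cost n G i a) + sys_cost n G a
      \<le> ?l * sys_cost n G a' + ?m * sys_cost n G a" .
qed

lemma GPoA_le:
  assumes hpos: "\<forall>t\<in>T. \<forall>k\<in>{1..n}. fst t k > 0"
    and nu: "\<nu> > 0" and rho: "\<rho> > 0"
    and cols: "\<forall>j\<in>Cols T n. colN j + \<nu> * colD j \<le> \<rho> * colO j"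
  shows "GPoA T n \<le> ereal \<rho>"
proof -
  have sm: "smooth_pair T n (\<rho> / \<nu>) (1 - 1 / \<nu>)" by (rule smooth_from_cols[OF hpos nu rho cols])
  have "GPoA T n \<le> ereal (fst (\<rho> / \<nu>, 1 - 1 / \<nu>) / (1 - snd (\<rho> / \<nu>, 1 - 1 / \<nu>)))"
    unfolding GPoA_def by (rule INF_lower) (use sm in simp)
  also have "fst (\<rho> / \<nu>, 1 - 1 / \<nu>) / (1 - snd (\<rho> / \<nu>, 1 - 1 / \<nu>)) = \<rho>" using nu by simp
  finally show ?thesis .
qed

lemma colO_nonneg:
  assumes hpos: "\<forall>t\<in>T. \<forall>k\<in>{1..n}. fst t k > 0" and j: "j \<in> Cols T n"
  shows "colO j \<ge> 0"
proof -
  obtain t a x b where jj: "j = (t, a, x, b)" by (cases j) auto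
  then have "t \<in> T" "x + b \<le> n" using j by (auto simp: Cols_def)
  then show ?thesis using cc_nonneg[OF hpos] jj by (simp add: colO_def)
qed

lemma colN_nonneg:
  assumes hpos: "\<forall>t\<in>T. \<forall>k\<in>{1..n}. fst t k > 0" and j: "j \<in> Cols T n"
  shows "colN j \<ge> 0"
proof -
  obtain t a x b where jj: "j = (t, a, x, b)" by (cases j) auto
  then have "t \<in> T" "a + x \<le> n" using j by (auto simp: Cols_def)
  then show ?thesis using cc_nonneg[OF hpos] jj by (simp add: colN_def)
qed

lemma D_pos_O_pos:
  assumes hpos: "\<forall>t\<in>T. \<forall>k\<in>{1..n}. fst t k > 0" and hf: "\<forall>t\<in>T. \<forall>k\<in>{1..n}. snd t k > 0"
    and j: "j \<in> Cols T n" and D: "colD j > 0"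
  shows "colO j > 0"
proof -
  obtain t a x b where jj: "j = (t, a, x, b)" by (cases j) auto
  then have t: "t \<in> T" and w: "a + x + b \<le> n" using j by (auto simp: Cols_def)
  have "b \<noteq> 0"
  proof
    assume b0: "b = 0"
    show False
    proof (cases "a = 0")
      case True
      then show False using D jj b0 by (simp add: colD_def)
    next
      case False
      then have "snd t (a + x) > 0" using hf t w b0 by auto
      then have "real a * snd t (a + x) > 0" using False by simp
      then show False using D jj b0 by (simp add: colD_def)
    qed
  qed
  then have "cc t (x + b) > 0" using cc_pos[OF hpos t, of "x + b"] w by simp
  then show ?thesis using jj by (simp add: colO_def)
qed

lemma O0_D0_N0:
  assumes hpos: "\<forall>t\<in>T. \<forall>k\<in>{1..n}. fst t k > 0" and hf: "\<forall>t\<in>T. \<forall>k\<in>{1..n}. snd t k > 0"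
    and j: "j \<in> Cols T n" and O: "colO j = 0" and D: "colD j = 0"
  shows "colN j = 0"
proof -
  obtain t a x b where jj: "j = (t, a, x, b)" by (cases j) auto
  then have t: "t \<in> T" and w: "a + x + b \<le> n" using j by (auto simp: Cols_def)
  have xb: "x + b = 0"
  proof (rule ccontr)
    assume "x + b \<noteq> 0"
    then have "1 \<le> x + b" "x + b \<le> n" using w by auto
    then have "cc t (x + b) > 0" by (rule cc_pos[OF hpos t])
    then show False using O jj by (simp add: colO_def)
  qed
  have "a = 0"
  proof (rule ccontr)
    assume "a \<noteq> 0"
    then have "snd t a > 0" using hf t w by auto
    then have "real a * snd t a > 0" using \<open>a \<noteq> 0\<close> by simp
    then show False using D jj xb by (auto simp: colD_def)
  qed
  then show ?thesis using jj xb by (simp add: colN_def cc_def)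
qed

lemma PoA_ge_game:
  assumes G: "in_class T n G" and NE: "is_NE n G a" and c: "c \<le> cost_ratio (sys_cost n G a) (opt_cost n G)"
  shows "c \<le> PoA n G"
proof -
  have "cost_ratio (sys_cost n G a) (opt_cost n G) \<le> PoA n G"
    unfolding PoA_def by (rule SUP_upper) (use NE in simp)
  then show ?thesis using c by simp
qed

lemma opt_nonneg:
  assumes hpos: "\<forall>t\<in>T. \<forall>k\<in>{1..n}. fst t k > 0" and G: "in_class T n G"
  shows "opt_cost n G \<ge> 0"
  using opt_exists[OF G] sys_cost_nonneg[OF hpos G] by metis

lemma lower_game:
  assumes hpos: "\<forall>t\<in>T. \<forall>k\<in>{1..n}. fst t k > 0" and n: "n > 0"
    and j1: "j1 \<in> Cols T n" and j2: "j2 \<in> Cols T n"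
    and th: "th1 \<ge> 0" "th2 \<ge> 0"
    and D: "th1 * colD j1 + th2 * colD j2 \<ge> 0"
    and Opos: "th1 * colO j1 + th2 * colO j2 > 0"
  shows "\<exists>G. in_class T n G \<and> card (res G) \<le> 2 * n \<and>
     ereal ((th1 * colN j1 + th2 * colN j2) / (th1 * colO j1 + th2 * colO j2)) \<le> PoA n G"
proof -
  obtain t1 A1 X1 B1 where jj1: "j1 = (t1, A1, X1, B1)" by (cases j1) auto
  obtain t2 A2 X2 B2 where jj2: "j2 = (t2, A2, X2, B2)" by (cases j2) auto
  obtain G where G: "in_class T n G" "card (res G) \<le> 2 * n"
    and NEx: "\<exists>a. is_NE n G a \<and> sys_cost n G a = real n * (th1 * colN j1 + th2 * colN j2)"
    and Ox: "\<exists>a'\<in>allocs n G. sys_cost n G a' = real n * (th1 * colO j1 + th2 * colO j2)"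
    using game_exists[OF n j1[unfolded jj1] j2[unfolded jj2] th D[unfolded jj1 jj2]] jj1 jj2 by blast
  obtain a where a: "is_NE n G a" "sys_cost n G a = real n * (th1 * colN j1 + th2 * colN j2)" using NEx by blast
  obtain a' where a': "a' \<in> allocs n G" "sys_cost n G a' = real n * (th1 * colO j1 + th2 * colO j2)" using Ox by blast
  have "ereal (sys_cost n G a / sys_cost n G a') \<le> cost_ratio (sys_cost n G a) (opt_cost n G)"
  proof (rule ratio_ge)
    show "sys_cost n G a \<ge> 0" by (rule sys_cost_nonneg[OF hpos G(1)])
    show "opt_cost n G \<ge> 0" by (rule opt_nonneg[OF hpos G(1)])
    show "opt_cost n G \<le> sys_cost n G a'" by (rule opt_le[OF G(1) a'(1)])
    show "sys_cost n G a' > 0" using a'(2) Opos n by simp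
  qed
  moreover have "sys_cost n G a / sys_cost n G a' = (th1 * colN j1 + th2 * colN j2) / (th1 * colO j1 + th2 * colO j2)"
    using a(2) a'(2) n by simp
  ultimately have "ereal ((th1 * colN j1 + th2 * colN j2) / (th1 * colO j1 + th2 * colO j2)) \<le> PoA n G"
    using PoA_ge_game[OF G(1) a(1)] by simp
  then show ?thesis using G by blast
qed

lemma key_caseA:
  assumes hpos: "\<forall>t\<in>T. \<forall>k\<in>{1..n}. fst t k > 0" and n: "n > 0"
    and t: "t \<in> T" and k: "k \<in> {1..n}" and f: "snd t k \<le> 0"
  shows "\<exists>G. in_class T n G \<and> card (res G) \<le> 2 * n \<and> GPoA T n \<le> PoA n G"
proof -
  have j: "(t, k, 0, 0) \<in> Cols T n" using t k by (simp add: Cols_def)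
  have D: "1 * colD (t, k, 0, 0) + 0 * colD (t, k, 0, 0) \<ge> 0"
    using f by (simp add: colD_def mult_nonneg_nonpos)
  obtain G where G: "in_class T n G" "card (res G) \<le> 2 * n"
    and NEx: "\<exists>a. is_NE n G a \<and> sys_cost n G a = real n * (1 * colN (t, k, 0, 0) + 0 * colN (t, k, 0, 0))"
    and Ox: "\<exists>a'\<in>allocs n G. sys_cost n G a' = real n * (1 * colO (t, k, 0, 0) + 0 * colO (t, k, 0, 0))"
    using game_exists[OF n j j _ _ D] by auto
  obtain a where a: "is_NE n G a" "sys_cost n G a = real n * cc t k" using NEx by (auto simp: colN_def)
  obtain a' where a': "a' \<in> allocs n G" "sys_cost n G a' = 0" using Ox by (auto simp: colO_def cc_def)
  have "opt_cost n G = 0" using opt_le[OF G(1) a'(1)] a'(2) opt_nonneg[OF hpos G(1)] by simp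
  moreover have "sys_cost n G a > 0" using a(2) cc_pos[OF hpos t, of k] k n by simp
  ultimately have "cost_ratio (sys_cost n G a) (opt_cost n G) = \<infinity>" by (simp add: cost_ratio_def)
  then have "\<infinity> \<le> PoA n G" using PoA_ge_game[OF G(1) a(1)] by simp
  then have "GPoA T n \<le> PoA n G" by simp
  then show ?thesis using G by blast
qed

lemma key_caseB:
  assumes hpos: "\<forall>t\<in>T. \<forall>k\<in>{1..n}. fst t k > 0" and n: "n > 0" and T: "finite T" "T \<noteq> {}"
    and hf: "\<forall>t\<in>T. \<forall>k\<in>{1..n}. snd t k > 0"
  shows "\<exists>G. in_class T n G \<and> card (res G) \<le> 2 * n \<and> GPoA T n \<le> PoA n G"
proof -
  define SC where "SC = {j\<in>Cols T n. colD j \<ge> 0 \<and> colO j > 0}"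
  define PC where "PC = {(j, k). j \<in> Cols T n \<and> k \<in> Cols T n \<and> colD j > 0 \<and> colD k < 0}"
  define pr where "pr p = (case p of (j, k) \<Rightarrow>
      (colN j * (- colD k) + colN k * colD j) / (colO j * (- colD k) + colO k * colD j))" for p
  define Cand where "Cand = (\<lambda>j. colN j / colO j) ` SC \<union> pr ` PC"
  have finC: "finite (Cols T n)" by (rule finite_Cols[OF T(1)])
  have finCand: "finite Cand"
  proof -
    have "SC \<subseteq> Cols T n" by (auto simp: SC_def)
    moreover have "PC \<subseteq> Cols T n \<times> Cols T n" by (auto simp: PC_def)
    ultimately show ?thesis unfolding Cand_def using finC
      by (meson finite_Un finite_imageI finite_SigmaI finite_subset)
  qed
  obtain t0 where t0: "t0 \<in> T" using T(2) by auto
  have j0: "(t0, 0, 1, 0) \<in> SC"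
    using t0 n cc_pos[OF hpos t0, of 1] by (auto simp: SC_def Cols_def colD_def colO_def)
  have r0: "colN (t0, 0, 1, 0) / colO (t0, 0, 1, 0) = 1"
    using cc_pos[OF hpos t0, of 1] n by (simp add: colN_def colO_def)
  define V where "V = Max Cand"
  have "1 \<in> Cand" using j0 r0 unfolding Cand_def by force
  then have V1: "V \<ge> 1" unfolding V_def using finCand by (intro Max_ge) auto
  have Vin: "V \<in> Cand" unfolding V_def using finCand \<open>1 \<in> Cand\<close> by (intro Max_in) auto
  have Vge: "c \<le> V" if "c \<in> Cand" for c unfolding V_def using finCand that by (intro Max_ge) auto
  obtain G where G: "in_class T n G" "card (res G) \<le> 2 * n" "ereal V \<le> PoA n G"
  proof -
    consider (s) j where "j \<in> SC" "V = colN j / colO j" | (p) j k where "(j, k) \<in> PC" "V = pr (j, k)"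
      using Vin unfolding Cand_def by auto
    then show ?thesis
    proof cases
      case s
      then have j: "j \<in> Cols T n" "colD j \<ge> 0" "colO j > 0" by (auto simp: SC_def)
      obtain G where "in_class T n G" "card (res G) \<le> 2 * n"
        "ereal ((1 * colN j + 0 * colN j) / (1 * colO j + 0 * colO j)) \<le> PoA n G"
        using lower_game[OF hpos n j(1) j(1), of 1 0] j by auto
      then show ?thesis using that s by simp
    next
      case p
      then have jk: "j \<in> Cols T n" "k \<in> Cols T n" "colD j > 0" "colD k < 0" by (auto simp: PC_def)
      have Oj: "colO j > 0" by (rule D_pos_O_pos[OF hpos hf jk(1) jk(3)])
      have Ok: "colO k \<ge> 0" by (rule colO_nonneg[OF hpos jk(2)])
      have Dz: "(- colD k) * colD j + colD j * colD k \<ge> 0" by (simp add: algebra_simps)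
      have Op: "(- colD k) * colO j + colD j * colO k > 0"
      proof -
        have "(- colD k) * colO j > 0" using Oj jk(4) by (intro mult_pos_pos) auto
        moreover have "colD j * colO k \<ge> 0" using Ok jk(3) by simp
        ultimately show ?thesis by linarith
      qed
      obtain G where "in_class T n G" "card (res G) \<le> 2 * n"
        "ereal (((- colD k) * colN j + colD j * colN k) / ((- colD k) * colO j + colD j * colO k)) \<le> PoA n G"
        using lower_game[OF hpos n jk(1) jk(2) _ _ Dz Op] jk by auto
      moreover have "((- colD k) * colN j + colD j * colN k) / ((- colD k) * colO j + colD j * colO k) = V"
        using p(2) by (simp add: pr_def algebra_simps)
      ultimately show ?thesis using that by simp
    qed
  qed
  define LK where "LK = {k\<in>Cols T n. colD k < 0}"
  define Lf where "Lf k = (colN k - V * colO k) / (- colD k)" for k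
  have k0: "(t0, 1, 0, 0) \<in> LK"
    using t0 n hf by (auto simp: LK_def Cols_def colD_def)
  have finLK: "finite (Lf ` LK)" using finC by (simp add: LK_def)
  define \<nu> where "\<nu> = Max (Lf ` LK)"
  have nuge: "Lf k \<le> \<nu>" if "k \<in> LK" for k unfolding \<nu>_def using finLK that by (intro Max_ge) auto
  have nuin: "\<nu> \<in> Lf ` LK" unfolding \<nu>_def using finLK k0 by (intro Max_in) auto
  have "Lf (t0, 1, 0, 0) > 0"
    using cc_pos[OF hpos t0, of 1] hf t0 n by (simp add: Lf_def colN_def colO_def colD_def cc_def)
  then have nupos: "\<nu> > 0" using nuge[OF k0] by simp
  have cols: "\<forall>j\<in>Cols T n. colN j + \<nu> * colD j \<le> V * colO j"
  proof
    fix j assume j: "j \<in> Cols T n"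
    consider "colD j < 0" | "colD j = 0" | "colD j > 0" by linarith
    then show "colN j + \<nu> * colD j \<le> V * colO j"
    proof cases
      case 1
      then have "Lf j \<le> \<nu>" using nuge j by (simp add: LK_def)
      have p: "- colD j > 0" using 1 by simp
      have "(colN j - V * colO j) / (- colD j) \<le> \<nu>" using \<open>Lf j \<le> \<nu>\<close> by (simp only: Lf_def)
      then have "colN j - V * colO j \<le> \<nu> * (- colD j)" unfolding pos_divide_le_eq[OF p] .
      then show ?thesis by (simp add: algebra_simps)
    next
      case 2
      show ?thesis
      proof (cases "colO j > 0")
        case True
        then have "j \<in> SC" using 2 j by (simp add: SC_def)
        then have "colN j / colO j \<le> V" using Vge unfolding Cand_def by blast
        then have "colN j \<le> V * colO j" using True by (simp add: divide_le_eq)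
        then show ?thesis using 2 by simp
      next
        case False
        then have "colO j = 0" using colO_nonneg[OF hpos j] by simp
        then have "colN j = 0" using O0_D0_N0[OF hpos hf j _ 2] by simp
        then show ?thesis using 2 \<open>colO j = 0\<close> by simp
      qed
    next
      case 3
      obtain k where k: "k \<in> LK" "\<nu> = Lf k" using nuin by auto
      have kc: "k \<in> Cols T n" "colD k < 0" using k by (auto simp: LK_def)
      have "(j, k) \<in> PC" using j kc 3 by (simp add: PC_def)
      then have "pr (j, k) \<le> V" using Vge unfolding Cand_def by blast
      moreover have den: "colO j * (- colD k) + colO k * colD j > 0"
      proof -
        have "colO j * (- colD k) > 0" using D_pos_O_pos[OF hpos hf j 3] kc(2) by (intro mult_pos_pos) auto
        moreover have "colO k * colD j \<ge> 0" using colO_nonneg[OF hpos kc(1)] 3 by simp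
        ultimately show ?thesis by linarith
      qed
      ultimately have ineq: "colN j * (- colD k) + colN k * colD j \<le> V * (colO j * (- colD k) + colO k * colD j)"
        by (simp add: pr_def divide_le_eq)
      have nuk: "\<nu> * (- colD k) = colN k - V * colO k" using k(2) kc(2) by (simp add: Lf_def)
      have "(colN j + \<nu> * colD j) * (- colD k) = colN j * (- colD k) + (\<nu> * (- colD k)) * colD j"
        by (simp add: algebra_simps)
      also have "\<dots> = colN j * (- colD k) + (colN k - V * colO k) * colD j" by (simp only: nuk)
      also have "\<dots> \<le> (V * colO j) * (- colD k)" using ineq by (simp add: algebra_simps)
      finally have "(colN j + \<nu> * colD j) * (- colD k) \<le> (V * colO j) * (- colD k)" .
      then show ?thesis using kc(2) by (simp add: mult_le_cancel_right)
    qed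
  qed
  have "GPoA T n \<le> ereal V" by (rule GPoA_le[OF hpos nupos _ cols]) (use V1 in simp)
  then have "GPoA T n \<le> PoA n G" using G(3) by (rule order_trans)
  then show ?thesis using G by blast
qed

theorem theorem4:
  fixes T :: "rtype set" and n :: nat
  assumes "finite T" and "T \<noteq> {}" and "n > 0"
    and "\<forall>t\<in>T. \<forall>k\<in>{1..n}. fst t k > 0"
  shows "PoA_class T n = GPoA T n \<and>
         (\<exists>G. in_class T n G \<and> card (res G) \<le> 2 * n \<and> PoA n G = GPoA T n)"
proof -
  note hpos = assms(4)
  have key: "\<exists>G. in_class T n G \<and> card (res G) \<le> 2 * n \<and> GPoA T n \<le> PoA n G"
  proof (cases "\<exists>t\<in>T. \<exists>k\<in>{1..n}. snd t k \<le> 0")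
    case True
    then obtain t k where "t \<in> T" "k \<in> {1..n}" "snd t k \<le> 0" by blast
    then show ?thesis using key_caseA[OF hpos assms(3)] by blast
  next
    case False
    then have "\<forall>t\<in>T. \<forall>k\<in>{1..n}. snd t k > 0" by (auto simp: not_le)
    then show ?thesis using key_caseB[OF hpos assms(3) assms(1) assms(2)] by blast
  qed
  then obtain G where G: "in_class T n G" "card (res G) \<le> 2 * n" "GPoA T n \<le> PoA n G" by blast
  have up: "PoA_class T n \<le> GPoA T n" by (rule class_le_GPoA[OF hpos assms(2) assms(3)])
  have "PoA n G \<le> PoA_class T n" unfolding PoA_class_def by (rule SUP_upper) (use G in simp)
  then have e1: "PoA_class T n = GPoA T n" and e2: "PoA n G = GPoA T n"
    using up G(3) by (auto intro: antisym order_trans)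
  then show ?thesis using G by blast
qed

end
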